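(* Let $p$ be a prime, $n,e$ positive integers, and $u_{p,n,e}:\{1,\dots,n\}\to\mathbb{N}$, $u_{p,n,e}(k)=e\,\nu_p\binom{n}{k}+k$. Write $\ell=\log_p\frac{e}{p-1}$. Then the minimum value of $u_{p,n,e}$ is attained exactly at: (a) $k\in\{\frac{e}{p-1},\frac{pe}{p-1}\}$, if $\ell$ is an integer and $\ell<\nu_p(n)$; the minimum value is then $e\big(\nu_p(n)+\frac1{p-1}-\ell\big)$; (b) $k=p^{\nu_p(n)}$, if either $\ell$ is an integer with $\ell\ge\nu_p(n)$, or $\ell$ is not an integer and $\lceil\ell\rceil>\nu_p(n)$; the minimum value is then $p^{\nu_p(n)}$; (c) $k=p^{\lceil\ell\rceil}$, if $\ell$ is not an integer and $\lceil\ell\rceil\le\nu_p(n)$; the minimum value is then $e(\nu_p(n)-\lceil\ell\rceil)+p^{\lceil\ell\rceil}$.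
   Context: $\nu_p$ denotes the $p$-adic valuation. *)

theory Defs
  imports Complex_Main "HOL-Computational_Algebra.Primes"
begin

definition u :: "nat \<Rightarrow> nat \<Rightarrow> nat \<Rightarrow> nat \<Rightarrow> nat" where
  "u p n e k = e * multiplicity p (n choose k) + k"

definition minval :: "nat \<Rightarrow> nat \<Rightarrow> nat \<Rightarrow> nat" where
  "minval p n e = Min (u p n e ` {1..n})"

definition argmins :: "nat \<Rightarrow> nat \<Rightarrow> nat \<Rightarrow> nat set" where
  "argmins p n e = {k \<in> {1..n}. u p n e k = minval p n e}"

definition ell :: "nat \<Rightarrow> nat \<Rightarrow> real" where
  "ell p e = log (real p) (real e / (real p - 1))"

end

theory Submission
  imports Defs
begin

lemma fact_binom_prod: "fact k * (n choose k) = (\<Prod>i<k. n - i)"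
proof (induction k arbitrary: n)
  case 0 then show ?case by simp
next
  case (Suc k)
  show ?case
  proof (cases n)
    case 0 then show ?thesis by (simp add: prod.lessThan_Suc_shift)
  next
    case (Suc n')
    have "fact (Suc k) * (n choose Suc k) = fact k * (Suc k * (Suc n' choose Suc k))"
      by (simp add: Suc algebra_simps)
    also have "\<dots> = Suc n' * (fact k * (n' choose k))"
      by (simp only: Suc_times_binomial) (simp add: algebra_simps)
    also have "\<dots> = Suc n' * (\<Prod>i<k. n' - i)" using Suc.IH by simp
    also have "\<dots> = (\<Prod>i<Suc k. n - i)"
      unfolding Suc by (subst prod.lessThan_Suc_shift) simp
    finally show ?thesis .
  qed
qed

lemma mult_diff_eq:
  fixes p n i v :: nat
  assumes p: "prime p" and dv: "p ^ v dvd n" and i: "0 < i" "i < p ^ v" "i \<le> n"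
  shows "multiplicity p (n - i) = multiplicity p i"
proof -
  define t where "t = multiplicity p i"
  have ti: "p ^ t dvd i" unfolding t_def by (rule multiplicity_dvd)
  have nti: "\<not> p ^ Suc t dvd i"
    unfolding t_def using i p by (metis multiplicity_lessI not_less_eq_eq order_refl prime_gt_1_nat not_prime_unit le_imp_less_Suc multiplicity_geI less_not_refl2)
  have tv: "t < v"
  proof (rule ccontr)
    assume "\<not> t < v"
    hence "p ^ v dvd p ^ t" by (simp add: le_imp_power_dvd)
    hence "p ^ v dvd i" using ti dvd_trans by blast
    with i show False by (simp add: nat_dvd_not_less)
  qed
  have "p ^ t dvd n" using dv tv by (meson dvd_trans le_imp_power_dvd less_imp_le)
  hence a: "p ^ t dvd n - i" using ti by (simp add: dvd_diff_nat)
  have "p ^ Suc t dvd n" using dv tv by (meson dvd_trans le_imp_power_dvd Suc_leI)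
  hence b: "\<not> p ^ Suc t dvd n - i" using nti i
    by (metis diff_diff_cancel dvd_diff_nat)
  show ?thesis using multiplicity_eqI[OF a b] t_def by simp
qed

lemma mult_binom:
  fixes p n k :: nat
  assumes p: "prime p" and n: "n > 0" and k: "1 \<le> k" "k \<le> p ^ multiplicity p n"
  shows "multiplicity p (n choose k) + multiplicity p k = multiplicity p n"
proof -
  define v where "v = multiplicity p n"
  have dv: "p ^ v dvd n" unfolding v_def by (rule multiplicity_dvd)
  hence "p ^ v \<le> n" using n by (simp add: dvd_imp_le)
  hence kn: "k \<le> n" using k v_def by simp
  have pe: "prime_elem p" using p by simp
  have C0: "n choose k \<noteq> 0" using kn by simp
  have "multiplicity p (fact k * (n choose k)) = multiplicity p (fact k :: nat) + multiplicity p (n choose k)"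
    by (rule prime_elem_multiplicity_mult_distrib[OF pe]) (use C0 in auto)
  also have "fact k * (n choose k) = (\<Prod>i<k. n - i)" by (rule fact_binom_prod)
  also have "multiplicity p (\<Prod>i<k. n - i) = (\<Sum>i<k. multiplicity p (n - i))"
    by (rule prime_elem_multiplicity_prod_distrib[OF pe]) (use kn in auto)
  also have "{..<k} = insert 0 {1..<k}" using k by auto
  also have "(\<Sum>i\<in>insert 0 {1..<k}. multiplicity p (n - i)) = v + (\<Sum>i\<in>{1..<k}. multiplicity p (n - i))"
    by (simp add: v_def)
  also have "(\<Sum>i\<in>{1..<k}. multiplicity p (n - i)) = (\<Sum>i\<in>{1..<k}. multiplicity p i)"
    by (rule sum.cong) (use mult_diff_eq[OF p dv] k kn v_def in auto)
  finally have A: "multiplicity p (fact k :: nat) + multiplicity p (n choose k) = v + (\<Sum>i\<in>{1..<k}. multiplicity p i)" by simp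
  have "(fact k :: nat) = \<Prod>{1..k}" by (simp add: fact_prod)
  hence "multiplicity p (fact k :: nat) = (\<Sum>i\<in>{1..k}. multiplicity p i)"
    using prime_elem_multiplicity_prod_distrib[OF pe, of "\<lambda>i. i" "{1..k}"] by auto
  also have "{1..k} = insert k {1..<k}" using k by auto
  also have "(\<Sum>i\<in>insert k {1..<k}. multiplicity p i) = multiplicity p k + (\<Sum>i\<in>{1..<k}. multiplicity p i)"
    by simp
  finally show ?thesis using A v_def by simp
qed

lemma chain_up:
  fixes g :: "nat \<Rightarrow> int"
  assumes "a \<le> b" "\<And>t. a \<le> t \<Longrightarrow> t < b \<Longrightarrow> g t \<le> g (Suc t)"
  shows "g a \<le> g b"
proof -
  have "g a \<le> g i" if "a \<le> i" "i \<le> b" for i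
    using that
  proof (induction i rule: dec_induct)
    case base then show ?case by simp
  next
    case (step i) then show ?case using assms(2)[of i] by simp
  qed
  then show ?thesis using assms(1) by simp
qed

lemma chain_down:
  fixes g :: "nat \<Rightarrow> int"
  assumes "a \<le> b" "\<And>t. a \<le> t \<Longrightarrow> t < b \<Longrightarrow> g (Suc t) \<le> g t"
  shows "g b \<le> g a"
  using chain_up[of a b "\<lambda>t. - g t"] assms by simp

definition FF :: "nat \<Rightarrow> nat \<Rightarrow> nat \<Rightarrow> nat \<Rightarrow> int" where
  "FF p e v j = int e * (int v - int j) + int (p ^ j)"

lemma FF_step: "FF p e v (Suc t) - FF p e v t = int (p ^ t) * (int p - 1) - int e"
  by (simp add: FF_def algebra_simps)

lemma FF_min:
  fixes p e v J :: nat
  assumes p: "p \<ge> 2"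
    and J1: "e \<le> p ^ J * (p - 1)" and J2: "\<And>t. t < J \<Longrightarrow> p ^ t * (p - 1) < e"
    and j: "j \<le> v"
  shows "FF p e v (min J v) \<le> FF p e v j \<and>
     (FF p e v j = FF p e v (min J v) \<longleftrightarrow> j = min J v \<or> (e = p ^ J * (p - 1) \<and> J < v \<and> j = Suc J))"
proof -
  let ?F = "FF p e v"
  let ?m = "min J v"
  have stp: "?F (Suc t) - ?F t = int (p ^ t * (p - 1)) - int e" for t
    using FF_step[of p e v t] p by (simp add: of_nat_diff)
  have down: "?F (Suc t) < ?F t" if "t < J" for t using stp[of t] J2[OF that] by linarith
  have mono: "p ^ J * (p - 1) \<le> p ^ t * (p - 1)" if "J \<le> t" for t
    using p that by (simp add: power_increasing)
  have smono: "p ^ J * (p - 1) < p ^ t * (p - 1)" if "J < t" for t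
    using p that by (simp add: power_strict_increasing)
  have up: "?F t \<le> ?F (Suc t)" if "J \<le> t" for t using stp[of t] mono[OF that] J1 by linarith
  have sup: "?F t < ?F (Suc t)" if "J < t" for t using stp[of t] smono[OF that] J1 by linarith
  have sup0: "?F J < ?F (Suc J)" if "e \<noteq> p ^ J * (p - 1)" using stp[of J] that J1 by linarith
  have eq0: "?F J = ?F (Suc J)" if "e = p ^ J * (p - 1)" using stp[of J] that by linarith
  show ?thesis
  proof (cases "j \<le> ?m")
    case True
    show ?thesis
    proof (cases "j = ?m")
      case True then show ?thesis by auto
    next
      case False
      hence jm: "j < ?m" using True by (rule_tac le_neq_trans) auto
      have "?F ?m \<le> ?F (Suc j)"
        by (rule chain_down) (use jm down in \<open>auto intro: less_imp_le\<close>)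
      moreover have "?F (Suc j) < ?F j" using jm down by simp
      ultimately show ?thesis using jm by auto
    qed
  next
    case False
    hence mJ: "?m = J" and Jj: "J < j" using j by auto
    have A: "?F J \<le> ?F j" by (rule chain_up) (use Jj up in auto)
    show ?thesis
    proof (cases "e = p ^ J * (p - 1) \<and> j = Suc J")
      case True then show ?thesis using eq0 mJ Jj j by auto
    next
      case False
      have "?F J < ?F j"
      proof (cases "j = Suc J")
        case True
        then show ?thesis using False sup0 by auto
      next
        case False
        hence "Suc J < j" using Jj by simp
        have "?F J \<le> ?F (j - 1)" by (rule chain_up) (use Jj up in auto)
        moreover have "?F (j - 1) < ?F (Suc (j - 1))" by (rule sup) (use \<open>Suc J < j\<close> in auto)
        ultimately show ?thesis using \<open>Suc J < j\<close> by (simp add: Suc_diff_1)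
      qed
      then show ?thesis using mJ False by auto
    qed
  qed
qed

lemma u_main:
  fixes p n e J :: nat
  assumes p: "prime p" and n: "n > 0"
    and J1: "e \<le> p ^ J * (p - 1)" and J2: "\<And>t. t < J \<Longrightarrow> p ^ t * (p - 1) < e"
  defines "v \<equiv> multiplicity p n"
  defines "m \<equiv> min J v"
  defines "S \<equiv> {p ^ m} \<union> (if e = p ^ J * (p - 1) \<and> J < v then {p ^ Suc J} else {})"
  shows "minval p n e = e * (v - m) + p ^ m \<and> argmins p n e = S"
proof -
  have p2: "p \<ge> 2" using p by (simp add: prime_ge_2_nat)
  have pe: "prime_elem p" using p by simp
  have "p ^ v dvd n" unfolding v_def by (rule multiplicity_dvd)
  hence pvn: "p ^ v \<le> n" using n by (simp add: dvd_imp_le)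
  have ppos: "p ^ j \<ge> 1" for j using p2 by simp
  have uval: "u p n e (p ^ j) = e * (v - j) + p ^ j" if "j \<le> v" for j
  proof -
    have "p ^ j \<le> p ^ v" using that p2 by (simp add: power_increasing)
    hence "multiplicity p (n choose p ^ j) + j = v"
      using mult_binom[OF p n, of "p ^ j"] ppos[of j] pe v_def by simp
    hence "multiplicity p (n choose p ^ j) = v - j" by linarith
    thus ?thesis unfolding u_def by simp
  qed
  have uF: "int (u p n e (p ^ j)) = FF p e v j" if "j \<le> v" for j
    using uval[OF that] that by (simp add: FF_def of_nat_diff)
  have Fm: "FF p e v m \<le> FF p e v j \<and>
     (FF p e v j = FF p e v m \<longleftrightarrow> j = m \<or> (e = p ^ J * (p - 1) \<and> J < v \<and> j = Suc J))"
    if "j \<le> v" for j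
    using FF_min[OF p2 J1 J2 that] m_def by simp
  have lower: "FF p e v m \<le> int (u p n e k) \<and> (int (u p n e k) = FF p e v m \<longrightarrow> k \<in> S)"
    if k: "k \<in> {1..n}" for k
  proof (cases "k \<le> p ^ v")
    case True
    define j where "j = multiplicity p k"
    have mb: "multiplicity p (n choose k) + j = v"
      using mult_binom[OF p n, of k] k True v_def j_def by simp
    hence jv: "j \<le> v" by simp
    have "p ^ j dvd k" unfolding j_def by (rule multiplicity_dvd)
    hence pk: "p ^ j \<le> k" using k by (simp add: dvd_imp_le)
    have "multiplicity p (n choose k) = v - j" using mb by linarith
    hence uk: "u p n e k = e * (v - j) + k" unfolding u_def by simp
    have ge: "FF p e v j \<le> int (u p n e k)" using uk pk jv by (simp add: FF_def of_nat_diff)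
    show ?thesis
    proof (intro conjI impI)
      show "FF p e v m \<le> int (u p n e k)" using ge Fm[OF jv] by simp
      assume eq: "int (u p n e k) = FF p e v m"
      hence "FF p e v j = FF p e v m" "int (u p n e k) = FF p e v j" using ge Fm[OF jv] by linarith+
      hence "int (u p n e k) = int e * (int v - int j) + int (p ^ j)" unfolding FF_def by simp
      moreover have "int (u p n e k) = int e * (int v - int j) + int k" using uk jv by (simp add: of_nat_diff)
      ultimately have "int k = int (p ^ j)" by linarith
      hence "k = p ^ j" by simp
      moreover have "j = m \<or> (e = p ^ J * (p - 1) \<and> J < v \<and> j = Suc J)"
        using Fm[OF jv] \<open>FF p e v j = FF p e v m\<close> by simp
      ultimately show "k \<in> S" unfolding S_def by auto
    qed
  next
    case False
    have "int (u p n e k) \<ge> int k" unfolding u_def by simp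
    moreover have "FF p e v v = int (p ^ v)" using uF[of v] uval[of v] by simp
    ultimately have "FF p e v v < int (u p n e k)" using False by simp
    thus ?thesis using Fm[of v] by auto
  qed
  have Sin: "S \<subseteq> {1..n}"
  proof -
    have "p ^ m \<le> p ^ v" using p2 m_def by (simp add: power_increasing)
    hence a: "p ^ m \<in> {1..n}" using pvn ppos[of m] by simp
    have b: "p ^ Suc J \<in> {1..n}" if "J < v"
    proof -
      have "p ^ Suc J \<le> p ^ v" using p2 that power_increasing[of "Suc J" v p] by simp
      thus ?thesis using pvn ppos[of "Suc J"] by simp
    qed
    show ?thesis using a b unfolding S_def by auto
  qed
  have Sval: "int (u p n e k) = FF p e v m" if "k \<in> S" for k
  proof -
    have mv: "m \<le> v" using m_def by simp
    show ?thesis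
    proof (cases "k = p ^ m")
      case True then show ?thesis using uF[OF mv] by simp
    next
      case False
      hence c: "e = p ^ J * (p - 1)" "J < v" "k = p ^ Suc J" using that unfolding S_def
        by (auto split: if_splits)
      have "FF p e v (Suc J) = FF p e v m" using Fm[of "Suc J"] c by simp
      then show ?thesis using uF[of "Suc J"] c by simp
    qed
  qed
  have pmS: "p ^ m \<in> S" unfolding S_def by simp
  have umin: "u p n e (p ^ m) = e * (v - m) + p ^ m" using uval m_def by simp
  have mv: "minval p n e = u p n e (p ^ m)"
    unfolding minval_def
  proof (rule Min_eqI)
    show "finite (u p n e ` {1..n})" by simp
    show "u p n e (p ^ m) \<in> u p n e ` {1..n}" using Sin pmS by blast
    fix y assume "y \<in> u p n e ` {1..n}"
    then obtain k where "k \<in> {1..n}" "y = u p n e k" by auto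
    thus "u p n e (p ^ m) \<le> y" using lower Sval[OF pmS] by fastforce
  qed
  have "argmins p n e = S"
  proof
    show "argmins p n e \<subseteq> S"
    proof
      fix k assume "k \<in> argmins p n e"
      hence "k \<in> {1..n}" "u p n e k = u p n e (p ^ m)" unfolding argmins_def mv by auto
      thus "k \<in> S" using lower Sval[OF pmS] by auto
    qed
    show "S \<subseteq> argmins p n e"
      using Sin Sval Sval[OF pmS] unfolding argmins_def mv by fastforce
  qed
  thus ?thesis using mv umin by simp
qed

theorem mainTheorem14:
  fixes p n e :: nat
  assumes "prime p" and "n > 0" and "e > 0"
  shows
   "(ell p e \<in> \<int> \<and> ell p e < real (multiplicity p n) \<longrightarrow>
       argmins p n e = {k. real k = real e / (real p - 1) \<or> real k = real p * real e / (real p - 1)}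
     \<and> real (minval p n e) = real e * (real (multiplicity p n) + 1 / (real p - 1) - ell p e))
  \<and> ((ell p e \<in> \<int> \<and> ell p e \<ge> real (multiplicity p n)) \<or>
      (ell p e \<notin> \<int> \<and> \<lceil>ell p e\<rceil> > int (multiplicity p n)) \<longrightarrow>
       argmins p n e = {p ^ multiplicity p n} \<and> minval p n e = p ^ multiplicity p n)
  \<and> (ell p e \<notin> \<int> \<and> \<lceil>ell p e\<rceil> \<le> int (multiplicity p n) \<longrightarrow>
       argmins p n e = {k. real k = real p powr real_of_int \<lceil>ell p e\<rceil>}
     \<and> real (minval p n e) = real e * (real (multiplicity p n) - real_of_int \<lceil>ell p e\<rceil>)
                            + real p powr real_of_int \<lceil>ell p e\<rceil>)"
proof -
  note p = assms(1) and n = assms(2) and e = assms(3)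
  have p2: "p \<ge> 2" using p by (simp add: prime_ge_2_nat)
  define v where "v = multiplicity p n"
  define J where "J = (LEAST j. e \<le> p ^ j * (p - 1))"
  have ex: "e \<le> p ^ e * (p - 1)"
  proof -
    have "e < 2 ^ e" by (rule less_exp)
    also have "(2::nat) ^ e \<le> p ^ e" using p2 by (simp add: power_mono)
    also have "p ^ e \<le> p ^ e * (p - 1)" using p2 by simp
    finally show ?thesis by simp
  qed
  have J1: "e \<le> p ^ J * (p - 1)" unfolding J_def by (rule LeastI[of _ e]) (rule ex)
  have J2: "p ^ t * (p - 1) < e" if "t < J" for t
    using not_less_Least[of t "\<lambda>j. e \<le> p ^ j * (p - 1)"] that unfolding J_def by simp
  define c where "c = real e / (real p - 1)"
  have pr: "real p > 1" using p2 by simp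
  have pm1: "real p - 1 > 0" using p2 by simp
  have cpos: "c > 0" unfolding c_def using e pm1 by simp
  have rpm1: "real (p - 1) = real p - 1" using p2 by (simp add: of_nat_diff)
  have lle: "ell p e \<le> real J"
  proof -
    have "real e \<le> real (p ^ J) * (real p - 1)" using J1 rpm1
      by (metis of_nat_le_iff of_nat_mult)
    hence "c \<le> real p ^ J" unfolding c_def using pm1 by (simp add: divide_le_eq)
    hence "log (real p) c \<le> log (real p) (real p ^ J)"
      using cpos pr by (subst log_le_cancel_iff) auto
    thus ?thesis unfolding ell_def c_def[symmetric] using pr by simp
  qed
  have lgt: "real J - 1 < ell p e"
  proof (cases J)
    case 0
    have "1 / real p < 1 / (real p - 1)" using pm1 by (intro divide_strict_left_mono) auto
    also have "1 / (real p - 1) \<le> c" unfolding c_def using e pm1 by (intro divide_right_mono) auto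
    finally have "1 / real p < c" .
    hence "real p powr (-1) < c" using pr by (simp add: powr_minus divide_inverse)
    hence "-1 < log (real p) c" using pr cpos by (subst less_log_iff) auto
    thus ?thesis using 0 unfolding ell_def c_def by simp
  next
    case (Suc t)
    have "p ^ t * (p - 1) < e" using J2 Suc by simp
    hence "real (p ^ t) * (real p - 1) < real e" using rpm1 by (metis of_nat_less_iff of_nat_mult)
    hence "real p ^ t < c" unfolding c_def using pm1 by (simp add: less_divide_eq)
    hence "real t < log (real p) c" using pr cpos by (subst less_log_iff) (auto simp: powr_realpow)
    thus ?thesis using Suc unfolding ell_def c_def by simp
  qed
  have ceil: "\<lceil>ell p e\<rceil> = int J" using lle lgt by (simp add: ceiling_eq_iff)
  have cJ: "c = real p ^ J" if "e = p ^ J * (p - 1)"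
  proof -
    have "c = real (p ^ J * (p - 1)) / (real p - 1)" unfolding c_def using that by simp
    also have "\<dots> = real p ^ J * (real p - 1) / (real p - 1)" using rpm1 by simp
    also have "\<dots> = real p ^ J" using pm1 by simp
    finally show ?thesis .
  qed
  have tie_iff: "ell p e \<in> \<int> \<longleftrightarrow> e = p ^ J * (p - 1)"
  proof
    assume "ell p e \<in> \<int>"
    then obtain z where z: "ell p e = of_int z" by (auto elim: Ints_cases)
    hence "z = int J" using ceil by simp
    hence lj: "ell p e = real J" using z by simp
    have "real p powr log (real p) c = c" using pr cpos by (intro powr_log_cancel) auto
    hence "real p powr real J = c" using lj unfolding ell_def c_def by simp
    hence "real p ^ J = c" using pr by (simp add: powr_realpow)
    moreover have "real e = c * (real p - 1)" unfolding c_def using pm1 by simp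
    ultimately have "real e = real p ^ J * real (p - 1)" using rpm1 by simp
    hence "real e = real (p ^ J * (p - 1))" by simp
    thus "e = p ^ J * (p - 1)" by (simp only: of_nat_eq_iff)
  next
    assume "e = p ^ J * (p - 1)"
    hence "c = real p ^ J" by (rule cJ)
    hence "ell p e = real J" unfolding ell_def c_def[symmetric] using pr by simp
    thus "ell p e \<in> \<int>" by simp
  qed
  have lJ: "ell p e = real J" if "ell p e \<in> \<int>"
    using that ceil by (metis Ints_cases ceiling_of_int of_int_of_nat_eq)
  note UM = u_main[OF p n J1 J2, folded v_def]
  show ?thesis
  proof (intro conjI impI)
    assume a: "ell p e \<in> \<int> \<and> ell p e < real (multiplicity p n)"
    hence tie: "e = p ^ J * (p - 1)" and Jv: "J < v" using tie_iff lJ v_def by auto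
    hence mJ: "min J v = J" by simp
    have S: "argmins p n e = {p ^ J, p ^ Suc J}" using UM tie Jv mJ by auto
    have e0: "real e / (real p - 1) = real (p ^ J)" using cJ[OF tie] unfolding c_def by simp
    have e1: "real p * real e / (real p - 1) = real (p ^ Suc J)"
      using e0 by (simp add: times_divide_eq_right[symmetric])
    show "argmins p n e = {k. real k = real e / (real p - 1) \<or> real k = real p * real e / (real p - 1)}"
      unfolding S e0 e1 of_nat_eq_iff by auto
    have "minval p n e = e * (v - J) + p ^ J" using UM mJ by simp
    hence "real (minval p n e) = real e * (real v - real J) + real p ^ J" using Jv by (simp add: of_nat_diff)
    also have "real p ^ J = real e * (1 / (real p - 1))" using cJ[OF tie] unfolding c_def by simp
    finally show "real (minval p n e) = real e * (real (multiplicity p n) + 1 / (real p - 1) - ell p e)"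
      using lJ a v_def by (simp add: algebra_simps)
  next
    assume a: "(ell p e \<in> \<int> \<and> ell p e \<ge> real (multiplicity p n)) \<or>
      (ell p e \<notin> \<int> \<and> \<lceil>ell p e\<rceil> > int (multiplicity p n))"
    hence Jv: "v \<le> J" using lJ ceil v_def by auto
    hence mv: "min J v = v" by simp
    have "\<not> J < v" using Jv by simp
    thus "argmins p n e = {p ^ multiplicity p n}" using UM mv v_def by simp
    show "minval p n e = p ^ multiplicity p n" using UM mv v_def by simp
  next
    assume a: "ell p e \<notin> \<int> \<and> \<lceil>ell p e\<rceil> \<le> int (multiplicity p n)"
    hence nt: "e \<noteq> p ^ J * (p - 1)" and Jv: "J \<le> v" using tie_iff ceil v_def by auto
    hence mJ: "min J v = J" by simp
    have pw: "real p powr real_of_int \<lceil>ell p e\<rceil> = real (p ^ J)" using ceil pr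
      by (simp add: powr_realpow)
    show "argmins p n e = {k. real k = real p powr real_of_int \<lceil>ell p e\<rceil>}"
      unfolding pw using UM nt mJ by (simp only: of_nat_eq_iff) simp
    have "minval p n e = e * (v - J) + p ^ J" using UM mJ by simp
    thus "real (minval p n e) = real e * (real (multiplicity p n) - real_of_int \<lceil>ell p e\<rceil>)
                            + real p powr real_of_int \<lceil>ell p e\<rceil>"
      unfolding pw using Jv ceil v_def by (simp add: of_nat_diff)
  qed
qed

end
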